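(* The mechanism given by Algorithm 2 (defined in the context) is envy-free and risk-averse truthful, for any number $n\ge2$ of agents with piecewise-constant value density functions.
   Context: All value densities are piecewise-constant functions $[0,1]\to\mathbb{R}_{\ge0}$; $v_i(X)=\int_X f_i$. Algorithm 2: given reported $f_1,\dots,f_n$, let $X$ be the union over $i$ of the points of $(0,1)$ at which $f_i$ is discontinuous, sorted as $x_1<\dots<x_{m-1}$, with $x_0=0$, $x_m=1$. For each $j=0,\dots,m-1$ and each agent $i\in\{1,\dots,n\}$, let $k=(i+j-1)\bmod n\in\{0,\dots,n-1\}$; agent $i$ receives $[x_j+\frac{k}{n}(x_{j+1}-x_j),\,x_j+\frac{k+1}{n}(x_{j+1}-x_j))$; $A_i$ is the union over $j$ of these pieces. An allocation is envy-free if $v_i(A_i)\ge v_i(A_j)$ for all $i,j$ (w.r.t. reported densities). A mechanism $\mathcal{M}$ is risk-averse truthful if for each agent $i$, each true density $f_i$ and each report $f_i'$, at least one holds: (1) for all reports $f_{-i}=(f_j)_{j\ne i}$ of the others, $v_i(\mathcal{M}_i(f_i,f_{-i}))\ge v_i(\mathcal{M}_i(f_i',f_{-i}))$; (2) there exist $f_{-i}$ with $v_i(\mathcal{M}_i(f_i',f_{-i}))<\frac1n v_i([0,1])$ (utilities w.r.t. the true $f_i$). *)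

theory Defs
  imports "HOL-Analysis.Analysis"
begin

definition piecewise_const_density :: "(real \<Rightarrow> real) \<Rightarrow> bool" where
  "piecewise_const_density f \<longleftrightarrow>
     (\<forall>x\<in>{0..1}. 0 \<le> f x) \<and>
     (\<exists>S. finite S \<and>
        (\<forall>x y. 0 \<le> x \<longrightarrow> x \<le> y \<longrightarrow> y \<le> 1 \<longrightarrow> {x..y} \<inter> S = {} \<longrightarrow> f x = f y))"

definition val :: "(real \<Rightarrow> real) \<Rightarrow> real set \<Rightarrow> real" where
  "val f X = integral X f"

definition disc_points :: "(real \<Rightarrow> real) \<Rightarrow> real set" where
  "disc_points f = {x \<in> {0<..<1}. \<not> isCont f x}"

definition breakpoints :: "nat \<Rightarrow> (nat \<Rightarrow> real \<Rightarrow> real) \<Rightarrow> real list" where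
  "breakpoints n fs = [0] @ sorted_list_of_set (\<Union>i\<in>{1..n}. disc_points (fs i)) @ [1]"

text \<open>Algorithm 2: allocation of agent i (agents are 1..n).\<close>
definition alg2 :: "nat \<Rightarrow> (nat \<Rightarrow> real \<Rightarrow> real) \<Rightarrow> nat \<Rightarrow> real set" where
  "alg2 n fs i =
     (let xs = breakpoints n fs; m = length xs - 1 in
      \<Union>j<m. (let k = (i + j - 1) mod n; a = xs ! j; b = xs ! (j + 1) in
              {a + real k / real n * (b - a) ..< a + real (k + 1) / real n * (b - a)}))"

definition envy_free_mech :: "nat \<Rightarrow> ((nat \<Rightarrow> real \<Rightarrow> real) \<Rightarrow> nat \<Rightarrow> real set) \<Rightarrow> bool" where
  "envy_free_mech n M \<longleftrightarrow>
     (\<forall>fs. (\<forall>i\<in>{1..n}. piecewise_const_density (fs i)) \<longrightarrow>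
        (\<forall>i\<in>{1..n}. \<forall>j\<in>{1..n}. val (fs i) (M fs i) \<ge> val (fs i) (M fs j)))"

definition risk_averse_truthful :: "nat \<Rightarrow> ((nat \<Rightarrow> real \<Rightarrow> real) \<Rightarrow> nat \<Rightarrow> real set) \<Rightarrow> bool" where
  "risk_averse_truthful n M \<longleftrightarrow>
     (\<forall>i\<in>{1..n}. \<forall>f f'. piecewise_const_density f \<longrightarrow> piecewise_const_density f' \<longrightarrow>
        ((\<forall>fs. (\<forall>j\<in>{1..n} - {i}. piecewise_const_density (fs j)) \<longrightarrow>
              val f (M (fs(i := f)) i) \<ge> val f (M (fs(i := f')) i))
         \<or>
         (\<exists>fs. (\<forall>j\<in>{1..n} - {i}. piecewise_const_density (fs j)) \<and>
              val f (M (fs(i := f')) i) < 1 / real n * val f {0..1})))"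

end

theory Submission
  imports Defs
begin


lemma int_closed:
  fixes h :: "real \<Rightarrow> real"
  assumes "a \<le> b" "finite F" "\<And>x. x \<in> {a<..<b} - F \<Longrightarrow> h x = c"
  shows "(h has_integral c * (b - a)) {a..b}"
proof -
  have 1: "((\<lambda>x. c) has_integral c * (b - a)) {a..b}" using has_integral_const_real[of c a b] assms(1) by (simp add: mult.commute)
  have 2: "\<And>x. x \<in> {a..b} - (F \<union> {a,b}) \<Longrightarrow> h x = c" using assms(3) by auto
  show ?thesis
    by (rule has_integral_spike_finite[where S="F \<union> {a,b}" and T="{a..b}", OF _ 2 1]) (use assms(2) in simp)
qed

lemma int_ho_iff:
  fixes h :: "real \<Rightarrow> real"
  shows "(h has_integral I) {a..<b} \<longleftrightarrow> (h has_integral I) {a..b}"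
  by (rule has_integral_spike_set_eq; rule negligible_subset[of "{b}"]) auto

lemma int_ho:
  fixes h :: "real \<Rightarrow> real"
  assumes "a \<le> b" "finite F" "\<And>x. x \<in> {a<..<b} - F \<Longrightarrow> h x = c"
  shows "(h has_integral c * (b - a)) {a..<b}"
  unfolding int_ho_iff by (rule int_closed[OF assms])

lemma int_sub:
  fixes h :: "real \<Rightarrow> real"
  assumes "a \<le> s" "s \<le> t" "t \<le> b" "finite F" "\<And>x. x \<in> {a<..<b} - F \<Longrightarrow> h x = c"
  shows "(h has_integral c * (t - s)) {s..<t}"
  by (rule int_ho[OF assms(2,4)]) (use assms in auto)

lemma int_jump:
  fixes h :: "real \<Rightarrow> real"
  assumes "s \<le> d" "d \<le> t" "finite F" "\<And>x. x \<in> {s<..<d} - F \<Longrightarrow> h x = L"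
     "\<And>x. x \<in> {d<..<t} - F \<Longrightarrow> h x = R"
  shows "(h has_integral L * (d - s) + R * (t - d)) {s..t}"
  by (rule has_integral_combine[OF assms(1,2)]; rule int_closed) (use assms in auto)



definition seg :: "nat \<Rightarrow> real list \<Rightarrow> nat \<Rightarrow> nat \<Rightarrow> real set" where
  "seg n xs j k = {xs!j + real k / real n * (xs!(j+1) - xs!j) ..< xs!j + real (k+1) / real n * (xs!(j+1) - xs!j)}"

lemma alg2_eq: "alg2 n fs p = (\<Union>j<length (breakpoints n fs) - 1. seg n (breakpoints n fs) j ((p+j-1) mod n))"
  unfolding alg2_def seg_def Let_def by simp

lemma sorted_le: "sorted_wrt (<) xs \<Longrightarrow> i \<le> j \<Longrightarrow> j < length xs \<Longrightarrow> (xs!i::real) \<le> xs!j"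
  by (metis le_less sorted_wrt_nth_less)

lemma seg_sub:
  assumes "sorted_wrt (<) xs" "j + 1 < length xs" "k < n"
  shows "seg n xs j k \<subseteq> {xs!j..<xs!(j+1)}"
proof -
  have ab: "xs!j < xs!(j+1)" using assms sorted_wrt_nth_less by fastforce
  have n: "real n > 0" using assms by simp
  have "real k / real n \<ge> 0" by simp
  moreover have "real (k+1) / real n \<le> 1" using assms(3) n by (simp add: divide_le_eq)
  ultimately have "xs!j \<le> xs!j + real k / real n * (xs!(j+1) - xs!j)"
     "real (k+1) / real n * (xs!(j+1) - xs!j) \<le> 1 * (xs!(j+1) - xs!j)"
    using ab by (simp, intro mult_right_mono, simp_all)
  then have "xs!j \<le> xs!j + real k / real n * (xs!(j+1) - xs!j)"
     "xs!j + real (k+1) / real n * (xs!(j+1) - xs!j) \<le> xs!(j+1)" by simp_all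
  then show ?thesis unfolding seg_def by auto
qed

lemma union_integral:
  fixes h :: "real \<Rightarrow> real"
  assumes "sorted_wrt (<) xs" "length xs = Suc m" "\<And>j. j < m \<Longrightarrow> kf j < n"
    "\<And>j. j < m \<Longrightarrow> (h has_integral I j) (seg n xs j (kf j))"
  shows "(h has_integral (\<Sum>j<m. I j)) (\<Union>j<m. seg n xs j (kf j))"
proof (rule has_integral_UN)
  show "pairwise (\<lambda>i i'. negligible (seg n xs i (kf i) \<inter> seg n xs i' (kf i'))) {..<m}"
  proof (rule pairwiseI)
    fix i i' assume i: "i \<in> {..<m}" and i': "i' \<in> {..<m}" and ne: "i \<noteq> i'"
    have d: "seg n xs i (kf i) \<inter> seg n xs i' (kf i') = {}" if "i < i'" "i < m" "i' < m" for i i'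
    proof -
      have "xs!(i+1) \<le> xs!i'" using sorted_le[OF assms(1), of "i+1" i'] that assms(2) by simp
      moreover have "seg n xs i (kf i) \<subseteq> {xs!i..<xs!(i+1)}"
        using seg_sub[OF assms(1), of i "kf i" n] that assms(2,3) by simp
      moreover have "seg n xs i' (kf i') \<subseteq> {xs!i'..<xs!(i'+1)}"
        using seg_sub[OF assms(1), of i' "kf i'" n] that assms(2,3) by simp
      ultimately show ?thesis by fastforce
    qed
    show "negligible (seg n xs i (kf i) \<inter> seg n xs i' (kf i'))"
      using d[of i i'] d[of i' i] ne i i' by (cases "i < i'") (auto simp: Int_commute)
  qed
qed (use assms in auto)

lemma combine_pieces:
  fixes h :: "real \<Rightarrow> real"
  assumes "sorted_wrt (<) xs" "length xs = Suc m"
    "\<And>j. j < m \<Longrightarrow> (h has_integral P j) {xs!j..xs!(j+1)}"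
  shows "(h has_integral (\<Sum>j<m. P j)) {xs!0..xs!m}"
proof -
  have "q \<le> m \<Longrightarrow> (h has_integral (\<Sum>j<q. P j)) {xs!0..xs!q}" for q
  proof (induction q)
    case 0
    then show ?case using has_integral_refl(2) by simp
  next
    case (Suc q)
    have "xs!0 \<le> xs!q" using sorted_le[OF assms(1), of 0 q] Suc assms(2) by simp
    moreover have "xs!q \<le> xs!(Suc q)" using sorted_le[OF assms(1), of q "Suc q"] Suc assms(2) by simp
    moreover have "(h has_integral (\<Sum>j<q. P j)) {xs!0..xs!q}" using Suc by simp
    moreover have "(h has_integral P q) {xs!q..xs!(Suc q)}" using assms(3)[of q] Suc by simp
    ultimately have "(h has_integral (\<Sum>j<q. P j) + P q) {xs!0..xs!Suc q}"
      by (rule has_integral_combine)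
    then show ?case by simp
  qed
  then show ?thesis by simp
qed

lemma card_below:
  assumes "sorted_wrt (<) xs" "j < length xs"
  shows "card {p \<in> set xs. p < (xs!j::real)} = j"
proof -
  have "{p \<in> set xs. p < xs!j} = (nth xs) ` {..<j}"
  proof
    show "{p \<in> set xs. p < xs ! j} \<subseteq> (!) xs ` {..<j}"
    proof
      fix p assume "p \<in> {p \<in> set xs. p < xs ! j}"
      then obtain q where q: "q < length xs" "p = xs!q" "xs!q < xs!j" by (auto simp: in_set_conv_nth)
      have "q < j" using sorted_le[OF assms(1), of j q] q by (meson linorder_not_le not_le)
      then show "p \<in> (!) xs ` {..<j}" using q by auto
    qed
    show "(!) xs ` {..<j} \<subseteq> {p \<in> set xs. p < xs ! j}"
      using assms sorted_wrt_nth_less by fastforce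
  qed
  moreover have "inj_on (nth xs) {..<j}"
    by (rule inj_on_nth) (use assms strict_sorted_iff in auto)
  ultimately show ?thesis by (simp add: card_image)
qed

lemma gap:
  assumes "sorted_wrt (<) xs" "j + 1 < length xs" "x \<in> set xs"
  shows "\<not> (xs!j < x \<and> x < (xs!(j+1)::real))"
proof
  assume h: "xs!j < x \<and> x < xs!(j+1)"
  obtain q where q: "q < length xs" "x = xs!q" using assms(3) by (auto simp: in_set_conv_nth)
  show False
  proof (cases "q \<le> j")
    case True then show False using sorted_le[OF assms(1), of q j] q h assms by simp
  next
    case False then show False using sorted_le[OF assms(1), of "j+1" q] q h assms by simp
  qed
qed

lemma find_piece:
  assumes "sorted_wrt (<) xs" "a \<in> set xs" "b \<in> set xs" "a < (b::real)"
    "\<And>x. x \<in> set xs \<Longrightarrow> \<not> (a < x \<and> x < b)"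
  shows "\<exists>j. j + 1 < length xs \<and> xs!j = a \<and> xs!(j+1) = b"
proof -
  obtain j q where j: "j < length xs" "xs!j = a" and q: "q < length xs" "xs!q = b"
    using assms(2,3) by (auto simp: in_set_conv_nth)
  have "j < q" using sorted_le[OF assms(1), of q j] j q assms(4) by (meson linorder_not_le not_le)
  show ?thesis
  proof (cases "q = j + 1")
    case True then show ?thesis using j q by auto
  next
    case False
    then have "j + 1 < q" using \<open>j<q\<close> by simp
    then have "a < xs!(j+1)" "xs!(j+1) < b" using sorted_wrt_nth_less[OF assms(1)] j q by force+
    then show ?thesis using assms(5)[of "xs!(j+1)"] \<open>j+1<q\<close> q by simp
  qed
qed

lemma bp_props:
  assumes "finite U" "U \<subseteq> {0<..<1}" "xs = [0] @ sorted_list_of_set U @ [1::real]"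
  shows "sorted_wrt (<) xs" "length xs = Suc (Suc (card U))" "xs!0 = 0"
    "xs!(Suc (card U)) = 1" "set xs = insert 0 (insert 1 U)"
proof -
  show "sorted_wrt (<) xs" using assms strict_sorted_list_of_set
    by (auto simp: sorted_wrt_append)
  show "length xs = Suc (Suc (card U))" using assms by simp
  show "xs!0 = 0" using assms by simp
  show "xs!(Suc (card U)) = 1" using assms by (simp add: nth_append)
  show "set xs = insert 0 (insert 1 U)" using assms by auto
qed



definition isjump :: "(real \<Rightarrow> real) \<Rightarrow> real \<Rightarrow> bool" where
  "isjump f d \<longleftrightarrow> (\<exists>e>0. \<exists>L R F. L \<noteq> R \<and> finite F \<and> (\<forall>x\<in>{d-e<..<d}-F. f x = L) \<and> (\<forall>x\<in>{d<..<d+e}-F. f x = R))"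

lemma exists_notin: "a < (b::real) \<Longrightarrow> finite F \<Longrightarrow> \<exists>x\<in>{a<..<b}. x \<notin> F"
proof -
  assume "a < b" "finite F"
  then have "infinite ({a<..<b} - F)" using infinite_Ioo[of a b] by (simp add: Diff_infinite_finite)
  then obtain x where "x \<in> {a<..<b} - F" using infinite_imp_nonempty by blast
  then show ?thesis by blast
qed

lemma jump_or_const:
  fixes f :: "real \<Rightarrow> real"
  assumes "finite T"
  shows "(\<forall>x y. a < x \<longrightarrow> x \<le> y \<longrightarrow> y < b \<longrightarrow> {x..y} \<inter> T = {} \<longrightarrow> f x = f y) \<Longrightarrow>
    (\<exists>c F. finite F \<and> (\<forall>x\<in>{a<..<b}-F. f x = c)) \<or> (\<exists>d\<in>{a<..<b}. isjump f d)"
  using assms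
proof (induction T arbitrary: a b rule: finite_induct)
  case empty
  show ?case
  proof (cases "a < b")
    case True
    let ?m = "(a+b)/2"
    have H: "\<forall>x\<in>{a<..<b}. f x = f ?m"
    proof
      fix x assume x: "x \<in> {a<..<b}"
      show "f x = f ?m"
      proof (cases "x \<le> ?m")
        case True then show ?thesis using empty.prems[rule_format, of x ?m] x by auto
      next
        case False then show ?thesis using empty.prems[rule_format, of ?m x] x by auto
      qed
    qed
    have "finite {} \<and> (\<forall>x\<in>{a<..<b}-{}. f x = f ?m)" using H by blast
    then show ?thesis by blast
  next
    case False then have "{a<..<b} = {}" by auto
    then show ?thesis by (rule_tac disjI1, rule_tac exI[of _ 0], rule_tac exI[of _ "{}"], auto)
  qed
next
  case (insert t T)
  show ?case
  proof (cases "t \<in> {a<..<b}")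
    case False
    have "\<forall>x y. a < x \<longrightarrow> x \<le> y \<longrightarrow> y < b \<longrightarrow> {x..y} \<inter> T = {} \<longrightarrow> f x = f y"
    proof (intro allI impI)
      fix x y assume h: "a < x" "x \<le> y" "y < b" "{x..y} \<inter> T = {}"
      then have "{x..y} \<inter> insert t T = {}" using False by auto
      then show "f x = f y" using insert.prems[rule_format, of x y] h by blast
    qed
    then show ?thesis by (rule insert.IH)
  next
    case True
    have h1: "\<forall>x y. a < x \<longrightarrow> x \<le> y \<longrightarrow> y < t \<longrightarrow> {x..y} \<inter> T = {} \<longrightarrow> f x = f y"
    proof (intro allI impI)
      fix x y assume h: "a < x" "x \<le> y" "y < t" "{x..y} \<inter> T = {}"
      then have "{x..y} \<inter> insert t T = {}" by auto
      then show "f x = f y" using insert.prems[rule_format, of x y] h True by auto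
    qed
    have h2: "\<forall>x y. t < x \<longrightarrow> x \<le> y \<longrightarrow> y < b \<longrightarrow> {x..y} \<inter> T = {} \<longrightarrow> f x = f y"
    proof (intro allI impI)
      fix x y assume h: "t < x" "x \<le> y" "y < b" "{x..y} \<inter> T = {}"
      then have "{x..y} \<inter> insert t T = {}" by auto
      then show "f x = f y" using insert.prems[rule_format, of x y] h True by auto
    qed
    have J: ?thesis if "\<exists>d\<in>{a<..<t}. isjump f d" using that True by (intro disjI2) force
    have J2: ?thesis if "\<exists>d\<in>{t<..<b}. isjump f d" using that True by (intro disjI2) force
    show ?thesis
    proof (cases "\<exists>d\<in>{a<..<t}. isjump f d")
      case True then show ?thesis using J by blast
    next
      case nj1: False
      show ?thesis
      proof (cases "\<exists>d\<in>{t<..<b}. isjump f d")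
        case True then show ?thesis using J2 by blast
      next
        case nj2: False
        obtain c1 F1 where F1: "finite F1" "\<forall>x\<in>{a<..<t} - F1. f x = c1" using insert.IH[OF h1] nj1 by blast
        obtain c2 F2 where F2: "finite F2" "\<forall>x\<in>{t<..<b} - F2. f x = c2" using insert.IH[OF h2] nj2 by blast
        show ?thesis
        proof (cases "c1 = c2")
          case True
          have "\<forall>x\<in>{a<..<b} - (F1 \<union> F2 \<union> {t}). f x = c1"
          proof
            fix x assume x: "x \<in> {a<..<b} - (F1 \<union> F2 \<union> {t})"
            show "f x = c1"
            proof (cases "x < t")
              case True then show ?thesis using F1 x by auto
            next
              case False then show ?thesis using F2 x \<open>c1 = c2\<close> by auto
            qed
          qed
          then show ?thesis using F1 F2 by (intro disjI1 exI[of _ c1] exI[of _ "F1 \<union> F2 \<union> {t}"]) auto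
        next
          case False
          let ?e = "min (t - a) (b - t)"
          have e: "?e > 0" using \<open>t \<in> {a<..<b}\<close> by auto
          have A1: "\<forall>x\<in>{t-?e<..<t}-(F1\<union>F2). f x = c1"
          proof
            fix x assume "x \<in> {t-?e<..<t}-(F1\<union>F2)"
            then have "x \<in> {a<..<t} - F1" by auto
            then show "f x = c1" using F1(2) by blast
          qed
          have A2: "\<forall>x\<in>{t<..<t+?e}-(F1\<union>F2). f x = c2"
          proof
            fix x assume "x \<in> {t<..<t+?e}-(F1\<union>F2)"
            then have "x \<in> {t<..<b} - F2" by auto
            then show "f x = c2" using F2(2) by blast
          qed
          have "isjump f t" unfolding isjump_def
            using e A1 A2 False F1(1) F2(1)
            by (intro exI[of _ ?e] conjI exI[of _ c1] exI[of _ c2] exI[of _ "F1 \<union> F2"]) auto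
          then show ?thesis using \<open>t \<in> {a<..<b}\<close> by (intro disjI2 bexI[of _ t])
        qed
      qed
    qed
  qed
qed

lemma jump_not_cont:
  assumes "isjump f d"
  shows "\<not> isCont f d"
proof
  assume c: "isCont f d"
  obtain e L R F where e: "e > 0" "L \<noteq> R" "finite F" "\<forall>x\<in>{d-e<..<d}-F. f x = L"
    "\<forall>x\<in>{d<..<d+e}-F. f x = R" using assms unfolding isjump_def by blast
  have "\<bar>L - R\<bar>/2 > 0" using e by simp
  then obtain \<delta> where \<delta>: "\<delta> > 0" "\<forall>x'. norm (x' - d) < \<delta> \<longrightarrow> \<bar>f x' - f d\<bar> < \<bar>L - R\<bar>/2"
    using c unfolding continuous_at_real_range by blast
  let ?r = "min e \<delta>"
  obtain x1 where x1: "x1 \<in> {d - ?r<..<d}" "x1 \<notin> F" using exists_notin[of "d - ?r" d F] e \<delta> by auto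
  obtain x2 where x2: "x2 \<in> {d<..<d + ?r}" "x2 \<notin> F" using exists_notin[of d "d + ?r" F] e \<delta> by auto
  have "f x1 = L" using x1 e by auto
  moreover have "f x2 = R" using x2 e by auto
  moreover have "\<bar>f x1 - f d\<bar> < \<bar>L - R\<bar>/2" using \<delta> x1 by auto
  moreover have "\<bar>f x2 - f d\<bar> < \<bar>L - R\<bar>/2" using \<delta> x2 by auto
  ultimately have "\<bar>L - f d\<bar> < \<bar>L - R\<bar>/2" "\<bar>f d - R\<bar> < \<bar>L - R\<bar>/2"
    by (simp_all add: abs_minus_commute)
  moreover have "\<bar>L - R\<bar> \<le> \<bar>L - f d\<bar> + \<bar>f d - R\<bar>" using abs_triangle_ineq[of "L - f d" "f d - R"] by simp
  moreover have "\<And>u v w::real. u < w/2 \<Longrightarrow> v < w/2 \<Longrightarrow> w \<le> u+v \<Longrightarrow> False" by linarith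
  ultimately show False by blast
qed

lemma pc_disc_sub:
  assumes "finite S" "\<forall>x y. 0 \<le> x \<longrightarrow> x \<le> y \<longrightarrow> y \<le> 1 \<longrightarrow> {x..y} \<inter> S = {} \<longrightarrow> f x = f y"
  shows "disc_points f \<subseteq> S"
proof
  fix x assume x: "x \<in> disc_points f"
  then have x01: "0 < x" "x < 1" "\<not> isCont f x" unfolding disc_points_def by auto
  show "x \<in> S"
  proof (rule ccontr)
    assume xS: "x \<notin> S"
    obtain \<delta> where \<delta>: "\<delta> > 0" "\<forall>y\<in>S. y \<noteq> x \<longrightarrow> \<delta> \<le> dist x y" using finite_set_avoid[OF assms(1)] by blast
    let ?r = "min \<delta> (min x (1 - x))"
    have loc: "f y = f x" if "norm (y - x) < ?r" for y
    proof (cases "y \<le> x")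
      case True
      have "{y..x} \<inter> S = {}"
      proof (rule ccontr)
        assume "{y..x} \<inter> S \<noteq> {}"
        then obtain z where "z \<in> S" "y \<le> z" "z \<le> x" by auto
        then show False using \<delta> xS that by (force simp: dist_real_def)
      qed
      moreover have "\<bar>y - x\<bar> < x" using that by simp
      then have "0 \<le> y" by linarith
      ultimately show ?thesis using assms(2)[rule_format, of y x] True x01 by simp
    next
      case False
      have "{x..y} \<inter> S = {}"
      proof (rule ccontr)
        assume "{x..y} \<inter> S \<noteq> {}"
        then obtain z where "z \<in> S" "x \<le> z" "z \<le> y" by auto
        then show False using \<delta> xS that by (force simp: dist_real_def)
      qed
      moreover have "\<bar>y - x\<bar> < 1 - x" using that by simp
      then have "y \<le> 1" by linarith
      ultimately show ?thesis using assms(2)[rule_format, of x y] False x01 by simp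
    qed
    have "isCont f x" unfolding continuous_at_real_range
    proof (intro allI impI)
      fix e :: real assume "e > 0"
      have r: "?r > 0" using x01 \<delta> by simp
      show "\<exists>d>0. \<forall>x'. norm (x' - x) < d \<longrightarrow> \<bar>f x' - f x\<bar> < e"
      proof (intro exI[of _ ?r] conjI allI impI r)
        fix x' assume "norm (x' - x) < ?r"
        from loc[OF this] show "\<bar>f x' - f x\<bar> < e" using \<open>e > 0\<close> by simp
      qed
    qed
    then show False using x01 by simp
  qed
qed

lemma pc_finite_disc: "piecewise_const_density f \<Longrightarrow> finite (disc_points f)"
  unfolding piecewise_const_density_def using pc_disc_sub finite_subset by metis

lemma pc_aeconst:
  assumes "piecewise_const_density f" "0 \<le> a" "b \<le> 1" "disc_points f \<inter> {a<..<b} = {}"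
  shows "\<exists>c F. finite F \<and> (\<forall>x\<in>{a<..<b}-F. f x = c)"
proof -
  obtain S where S: "finite S" "\<forall>x y. 0 \<le> x \<longrightarrow> x \<le> y \<longrightarrow> y \<le> 1 \<longrightarrow> {x..y} \<inter> S = {} \<longrightarrow> f x = f y"
    using assms(1) unfolding piecewise_const_density_def by blast
  have "\<forall>x y. a < x \<longrightarrow> x \<le> y \<longrightarrow> y < b \<longrightarrow> {x..y} \<inter> S = {} \<longrightarrow> f x = f y"
    using S assms by auto
  from jump_or_const[OF S(1) this] show ?thesis
  proof
    assume "\<exists>d\<in>{a<..<b}. isjump f d"
    then obtain d where d: "d \<in> {a<..<b}" "isjump f d" by blast
    then have "d \<in> disc_points f" using jump_not_cont assms unfolding disc_points_def by auto
    then show ?thesis using d assms by auto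
  qed
qed

definition gD :: "real set \<Rightarrow> real \<Rightarrow> real" where
  "gD D x = real (card {p \<in> D. p \<le> x})"

lemma gD_seteq:
  assumes "x \<le> y" "{x..y} \<inter> D = {}"
  shows "{p \<in> D. p \<le> x} = {p \<in> D. p \<le> (y::real)}"
proof -
  have "p \<le> x" if "p \<in> D" "p \<le> y" for p
  proof (rule ccontr)
    assume "\<not> p \<le> x"
    then have "p \<in> {x..y} \<inter> D" using that by auto
    then show False using assms by blast
  qed
  then show ?thesis using assms(1) by force
qed

lemma gD_step: "\<forall>x y. 0 \<le> x \<longrightarrow> x \<le> y \<longrightarrow> y \<le> 1 \<longrightarrow> {x..y} \<inter> D = {} \<longrightarrow> gD D x = gD D y"
proof (intro allI impI)
  fix x y :: real assume "0 \<le> x" "x \<le> y" "y \<le> 1" "{x..y} \<inter> D = {}"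
  then have "{p \<in> D. p \<le> x} = {p \<in> D. p \<le> y}" using gD_seteq by blast
  then show "gD D x = gD D y" unfolding gD_def by simp
qed

lemma gD_pc: "finite D \<Longrightarrow> piecewise_const_density (gD D)"
  unfolding piecewise_const_density_def
proof (intro conjI ballI exI[of _ D] allI impI)
  fix x y :: real assume "finite D" "x \<le> y" "{x..y} \<inter> D = {}"
  then have "{p \<in> D. p \<le> x} = {p \<in> D. p \<le> y}" using gD_seteq by blast
  then show "gD D x = gD D y" unfolding gD_def by simp
qed (auto simp: gD_def)

lemma gD_disc:
  assumes "finite D" "D \<subseteq> {0<..<1}"
  shows "disc_points (gD D) = D"
proof
  show "disc_points (gD D) \<subseteq> D"
    by (rule pc_disc_sub[OF assms(1) gD_step])
  show "D \<subseteq> disc_points (gD D)"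
  proof
    fix p assume p: "p \<in> D"
    have "\<not> isCont (gD D) p" unfolding continuous_at_real_range
    proof
      assume h: "\<forall>e>0. \<exists>d>0. \<forall>x'. norm (x' - p) < d \<longrightarrow> \<bar>gD D x' - gD D p\<bar> < e"
      obtain d where d: "d > 0" "\<forall>x'. norm (x' - p) < d \<longrightarrow> \<bar>gD D x' - gD D p\<bar> < 1"
        using h[rule_format, of 1] by auto
      let ?x = "p - d/2"
      have sub: "{q \<in> D. q \<le> ?x} \<subseteq> {q \<in> D. q \<le> p} - {p}" using d by auto
      have "card {q \<in> D. q \<le> ?x} \<le> card ({q \<in> D. q \<le> p} - {p})"
        by (rule card_mono[OF _ sub]) (use assms in auto)
      also have "\<dots> = card {q \<in> D. q \<le> p} - 1" using p assms by (simp add: card_Diff_singleton)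
      finally have "gD D ?x \<le> gD D p - 1"
        unfolding gD_def using p assms
        by (metis (no_types, lifting) One_nat_def card_gt_0_iff empty_iff finite_subset mem_Collect_eq order_refl subsetI of_nat_diff of_nat_le_iff Suc_leI of_nat_1)
      then show False using d(2)[rule_format, of ?x] d(1) by auto
    qed
    then show "p \<in> disc_points (gD D)" using p assms unfolding disc_points_def by auto
  qed
qed



lemma seg_len:
  fixes a b :: real
  assumes "a \<le> b" "k < n"
  shows "a \<le> a + real k / real n * (b - a)"
    "a + real k / real n * (b - a) \<le> a + real (k+1) / real n * (b - a)"
    "a + real (k+1) / real n * (b - a) \<le> b"
    "(a + real (k+1) / real n * (b - a)) - (a + real k / real n * (b - a)) = (b - a) / real n"
proof -
  have n: "real n > 0" using assms by simp
  show "a \<le> a + real k / real n * (b - a)" using assms by simp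
  show "a + real k / real n * (b - a) \<le> a + real (k+1) / real n * (b - a)"
    using assms n by (intro add_left_mono mult_right_mono) (simp_all add: divide_right_mono)
  have "real (k+1) / real n \<le> 1" using assms(2) n by (simp add: divide_le_eq)
  then have "real (k+1) / real n * (b - a) \<le> 1 * (b - a)" using assms by (intro mult_right_mono) simp_all
  then show "a + real (k+1) / real n * (b - a) \<le> b" by simp
  show "(a + real (k+1) / real n * (b - a)) - (a + real k / real n * (b - a)) = (b - a) / real n"
    using n by (simp add: field_simps)
qed

lemma seg_const:
  fixes h :: "real \<Rightarrow> real"
  assumes "sorted_wrt (<) xs" "j + 1 < length xs" "k < n" "finite F"
    "\<forall>x\<in>{xs!j<..<xs!(j+1)}-F. h x = c"
  shows "(h has_integral c * (xs!(j+1) - xs!j) / real n) (seg n xs j k)"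
proof -
  have ab: "xs!j \<le> xs!(j+1)" using sorted_le[OF assms(1), of j "j+1"] assms(2) by simp
  note L = seg_len[OF ab assms(3)]
  have "(h has_integral c * ((xs!j + real (k+1) / real n * (xs!(j+1) - xs!j)) - (xs!j + real k / real n * (xs!(j+1) - xs!j))))
         {xs!j + real k / real n * (xs!(j+1) - xs!j) ..< xs!j + real (k+1) / real n * (xs!(j+1) - xs!j)}"
    by (rule int_sub[OF L(1) L(2) L(3) assms(4)]) (use assms(5) in blast)
  then show ?thesis unfolding seg_def L(4) by simp
qed

lemma piece_const:
  fixes h :: "real \<Rightarrow> real"
  assumes "sorted_wrt (<) xs" "j + 1 < length xs" "finite F"
    "\<forall>x\<in>{xs!j<..<xs!(j+1)}-F. h x = c"
  shows "(h has_integral c * (xs!(j+1) - xs!j)) {xs!j..xs!(j+1)}"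
proof -
  have ab: "xs!j \<le> xs!(j+1)" using sorted_le[OF assms(1), of j "j+1"] assms(2) by simp
  show ?thesis by (rule int_closed[OF ab assms(3)]) (use assms(4) in blast)
qed

lemma fair_general:
  fixes h :: "real \<Rightarrow> real"
  assumes "sorted_wrt (<) xs" "length xs = Suc m" "xs!0 = 0" "xs!m = 1" "n > 0"
    "\<And>j. j < m \<Longrightarrow> finite (F j)"
    "\<And>j. j < m \<Longrightarrow> \<forall>x\<in>{xs!j<..<xs!(j+1)}-F j. h x = C j"
  shows "(h has_integral (\<Sum>j<m. C j * (xs!(j+1) - xs!j))) {0..1}"
    "(h has_integral (\<Sum>j<m. C j * (xs!(j+1) - xs!j)) / real n) (\<Union>j<m. seg n xs j ((p+j-1) mod n))"
proof -
  have "(h has_integral (\<Sum>j<m. C j * (xs!(j+1) - xs!j))) {xs!0..xs!m}"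
    by (rule combine_pieces[OF assms(1,2)]) (rule piece_const[OF assms(1) _ assms(6) assms(7)], use assms(2) in auto)
  then show "(h has_integral (\<Sum>j<m. C j * (xs!(j+1) - xs!j))) {0..1}" using assms(3,4) by simp
  have "(h has_integral (\<Sum>j<m. C j * (xs!(j+1) - xs!j) / real n)) (\<Union>j<m. seg n xs j ((p+j-1) mod n))"
    by (rule union_integral[OF assms(1,2)]) (use assms(5) in simp, rule seg_const[OF assms(1) _ _ assms(6) assms(7)], use assms(2,5) in auto)
  then show "(h has_integral (\<Sum>j<m. C j * (xs!(j+1) - xs!j)) / real n) (\<Union>j<m. seg n xs j ((p+j-1) mod n))"
    by (simp add: sum_divide_distrib)
qed

definition U :: "nat \<Rightarrow> (nat \<Rightarrow> real \<Rightarrow> real) \<Rightarrow> real set" where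
  "U n fs = (\<Union>i\<in>{1..n}. disc_points (fs i))"

lemma U_props:
  assumes "\<forall>i\<in>{1..n}. piecewise_const_density (fs i)"
  shows "finite (U n fs)" "U n fs \<subseteq> {0<..<1}"
  using assms pc_finite_disc unfolding U_def disc_points_def by auto

lemma bp_info:
  assumes "\<forall>i\<in>{1..n}. piecewise_const_density (fs i)"
  defines "xs \<equiv> breakpoints n fs"
  shows "sorted_wrt (<) xs" "length xs = Suc (Suc (card (U n fs)))" "xs!0 = 0"
    "xs!(Suc (card (U n fs))) = 1" "set xs = insert 0 (insert 1 (U n fs))"
  using bp_props[OF U_props[OF assms(1)], of xs] unfolding xs_def breakpoints_def U_def by auto

lemma fair_alloc:
  fixes h :: "real \<Rightarrow> real"
  assumes pc: "\<forall>i\<in>{1..n}. piecewise_const_density (fs i)" and n: "n > 0"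
    and ae: "\<forall>j < length (breakpoints n fs) - 1. \<exists>c F. finite F \<and>
        (\<forall>x\<in>{breakpoints n fs!j<..<breakpoints n fs!(j+1)}-F. h x = c)"
  shows "val h (alg2 n fs p) = val h {0..1} / real n"
proof -
  define xs where "xs = breakpoints n fs"
  define m where "m = Suc (card (U n fs))"
  note I = bp_info[OF pc, folded xs_def m_def]
  have lm: "length xs - 1 = m" using I(2) by simp
  have "\<forall>j\<in>{..<m}. \<exists>c F. finite F \<and> (\<forall>x\<in>{xs!j<..<xs!(j+1)}-F. h x = c)"
    using ae lm unfolding xs_def by auto
  then obtain C where "\<forall>j\<in>{..<m}. \<exists>F. finite F \<and> (\<forall>x\<in>{xs!j<..<xs!(j+1)}-F. h x = C j)"
    by (metis bchoice)
  then obtain F where CF: "\<forall>j\<in>{..<m}. finite (F j) \<and> (\<forall>x\<in>{xs!j<..<xs!(j+1)}-F j. h x = C j)"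
    by (metis bchoice)
  note R1 = fair_general(1)[OF I(1,2) I(3) I(4) n, where F=F and C=C]
  note R2 = fair_general(2)[OF I(1,2) I(3) I(4) n, where F=F and C=C and p=p]
  have 1: "(h has_integral (\<Sum>j<m. C j * (xs!(j+1) - xs!j))) {0..1}" using R1 CF by blast
  have 2: "(h has_integral (\<Sum>j<m. C j * (xs!(j+1) - xs!j)) / real n) (alg2 n fs p)"
    using R2 CF unfolding alg2_eq xs_def[symmetric] lm by blast
  show ?thesis unfolding val_def using integral_unique[OF 1] integral_unique[OF 2] by simp
qed

lemma fair_disc:
  fixes h :: "real \<Rightarrow> real"
  assumes pc: "\<forall>i\<in>{1..n}. piecewise_const_density (fs i)" and n: "n > 0"
    and h: "piecewise_const_density h" and sub: "disc_points h \<subseteq> U n fs"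
  shows "val h (alg2 n fs p) = val h {0..1} / real n"
proof (rule fair_alloc[OF pc n], intro allI impI)
  fix j assume j: "j < length (breakpoints n fs) - 1"
  define xs where "xs = breakpoints n fs"
  note I = bp_info[OF pc, folded xs_def]
  have j1: "j + 1 < length xs" using j unfolding xs_def by simp
  have "0 \<le> xs!j" using sorted_le[OF I(1), of 0 j] I j1 by simp
  moreover have "xs!(j+1) \<le> 1" using sorted_le[OF I(1), of "j+1" "Suc (card (U n fs))"] I j1 by simp
  moreover have "\<forall>x\<in>disc_points h. x \<in> set xs" using sub I(5) by auto
  then have "disc_points h \<inter> {xs!j<..<xs!(j+1)} = {}"
    using gap[OF I(1) j1] by fastforce
  ultimately show "\<exists>c F. finite F \<and> (\<forall>x\<in>{breakpoints n fs!j<..<breakpoints n fs!(j+1)}-F. h x = c)"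
    using pc_aeconst[OF h] unfolding xs_def by blast
qed

lemma envy_free_part:
  assumes "n \<ge> 2"
  shows "envy_free_mech n (alg2 n)"
  unfolding envy_free_mech_def
proof (intro allI impI ballI)
  fix fs i j assume pc: "\<forall>i\<in>{1..n}. piecewise_const_density (fs i)" and i: "i \<in> {1..n}" and j: "j \<in> {1..n}"
  have n: "n > 0" using assms by simp
  have sub: "disc_points (fs i) \<subseteq> U n fs" using i unfolding U_def by auto
  show "val (fs i) (alg2 n fs j) \<le> val (fs i) (alg2 n fs i)"
    using fair_disc[OF pc n pc[rule_format, OF i] sub, of i] fair_disc[OF pc n pc[rule_format, OF i] sub, of j] by simp
qed



lemma const_interior:
  fixes f :: "real \<Rightarrow> real"
  assumes S: "\<forall>x y. 0 \<le> x \<longrightarrow> x \<le> y \<longrightarrow> y \<le> 1 \<longrightarrow> {x..y} \<inter> S = {} \<longrightarrow> f x = f y"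
    and "0 \<le> \<alpha>" "\<beta> \<le> 1" "S \<inter> {\<alpha><..<\<beta>} = {}"
  shows "\<forall>x\<in>{\<alpha><..<\<beta>}. f x = f ((\<alpha>+\<beta>)/2)"
proof
  fix x assume x: "x \<in> {\<alpha><..<\<beta>}"
  let ?m = "(\<alpha>+\<beta>)/2"
  show "f x = f ?m"
  proof (cases "x \<le> ?m")
    case True
    have "{x..?m} \<inter> S = {}" using assms(4) x True by auto
    then show ?thesis using S[rule_format, of x ?m] x True assms(2,3) by auto
  next
    case False
    have "{?m..x} \<inter> S = {}" using assms(4) x False by auto
    then show ?thesis using S[rule_format, of ?m x] x False assms(2,3) by auto
  qed
qed

lemma jump_ineq:
  fixes L R w :: real and n k :: nat
  assumes "n \<ge> 2" "w > 0" "L \<noteq> R" "k = (if L > R then n - 1 else 0)"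
  shows "L*(w/2) + R*(w/2) < (L*((real k + 1/2)*w) + R*((real n - real k - 1/2)*w)) / real n"
proof -
  have n: "real n > 0" "real n \<ge> 2" using assms(1) by auto
  have key: "real n * (L*(w/2) + R*(w/2)) < L*((real k + 1/2)*w) + R*((real n - real k - 1/2)*w)"
  proof (cases "L > R")
    case True
    then have k: "real k = real n - 1" using assms by (simp add: of_nat_diff)
    have "L*((real k + 1/2)*w) + R*((real n - real k - 1/2)*w) - real n * (L*(w/2) + R*(w/2))
          = w * (L - R) * (real n - 1) / 2" unfolding k by (simp add: algebra_simps)
    moreover have "w * (L - R) * (real n - 1) / 2 > 0" using True n assms(2) by simp
    ultimately show ?thesis by linarith
  next
    case False
    then have LR: "L < R" using assms(3) by simp
    have k: "real k = 0" using assms False by simp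
    have "L*((real k + 1/2)*w) + R*((real n - real k - 1/2)*w) - real n * (L*(w/2) + R*(w/2))
          = w * (R - L) * (real n - 1) / 2" unfolding k by (simp add: algebra_simps)
    moreover have "w * (R - L) * (real n - 1) / 2 > 0" using LR n assms(2) by simp
    ultimately show ?thesis by linarith
  qed
  show ?thesis using key n by (simp add: pos_less_divide_eq mult.commute)
qed



lemma U_upd:
  assumes "n \<ge> 2" "i \<in> {1..n}"
  shows "U n ((\<lambda>_. g)(i := f')) = disc_points f' \<union> disc_points g"
proof -
  have "\<exists>l\<in>{1..n}. l \<noteq> i"
    using assms by (intro bexI[of _ "if i = 1 then 2 else 1"]) auto
  then obtain l where l: "l \<in> {1..n}" "l \<noteq> i" by blast
  show ?thesis unfolding U_def
  proof
    show "(\<Union>x\<in>{1..n}. disc_points (((\<lambda>_. g)(i := f')) x)) \<subseteq> disc_points f' \<union> disc_points g"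
      by (auto split: if_splits)
    show "disc_points f' \<union> disc_points g \<subseteq> (\<Union>x\<in>{1..n}. disc_points (((\<lambda>_. g)(i := f')) x))"
      using l assms(2) by (auto intro!: bexI[of _ i] bexI[of _ l])
  qed
qed

lemma construct:
  fixes f f' :: "real \<Rightarrow> real"
  assumes n2: "n \<ge> 2" and i: "i \<in> {1..n}" and pcf: "piecewise_const_density f"
    and pcf': "piecewise_const_density f'"
    and others0: "\<forall>j\<in>{1..n} - {i}. piecewise_const_density (fs0 j)"
    and gt: "val f (alg2 n (fs0(i := f')) i) > val f {0..1} / real n"
  shows "\<exists>fs. (\<forall>j\<in>{1..n} - {i}. piecewise_const_density (fs j)) \<and>
              val f (alg2 n (fs(i := f')) i) < 1 / real n * val f {0..1}"
proof -
  have n0: "n > 0" using n2 by simp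
  define P0 where "P0 = fs0(i := f')"
  have pc0: "\<forall>l\<in>{1..n}. piecewise_const_density (P0 l)" using others0 pcf' unfolding P0_def by auto
  define xs0 where "xs0 = breakpoints n P0"
  note I0 = bp_info[OF pc0, folded xs0_def]
  have "\<not> (\<forall>j < length xs0 - 1. \<exists>c F. finite F \<and> (\<forall>x\<in>{xs0!j<..<xs0!(j+1)}-F. f x = c))"
  proof
    assume "\<forall>j < length xs0 - 1. \<exists>c F. finite F \<and> (\<forall>x\<in>{xs0!j<..<xs0!(j+1)}-F. f x = c)"
    then have "val f (alg2 n P0 i) = val f {0..1} / real n"
      using fair_alloc[OF pc0 n0] unfolding xs0_def by blast
    then show False using gt unfolding P0_def by simp
  qed
  then obtain j0 where j0: "j0 < length xs0 - 1"
    and nc: "\<not> (\<exists>c F. finite F \<and> (\<forall>x\<in>{xs0!j0<..<xs0!(j0+1)}-F. f x = c))" by blast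
  define a0 where "a0 = xs0!j0"
  define b0 where "b0 = xs0!(j0+1)"
  have j01: "j0 + 1 < length xs0" using j0 by simp
  have a00: "0 \<le> a0" using sorted_le[OF I0(1), of 0 j0] I0 j01 unfolding a0_def by simp
  have b01: "b0 \<le> 1" using sorted_le[OF I0(1), of "j0+1" "Suc (card (U n P0))"] I0 j01 unfolding b0_def by simp
  obtain S where S: "finite S" "\<forall>x y. 0 \<le> x \<longrightarrow> x \<le> y \<longrightarrow> y \<le> 1 \<longrightarrow> {x..y} \<inter> S = {} \<longrightarrow> f x = f y"
    using pcf unfolding piecewise_const_density_def by blast
  have "\<forall>x y. a0 < x \<longrightarrow> x \<le> y \<longrightarrow> y < b0 \<longrightarrow> {x..y} \<inter> S = {} \<longrightarrow> f x = f y"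
    using S(2) a00 b01 by auto
  from jump_or_const[OF S(1) this] nc obtain d where d: "d \<in> {a0<..<b0}" "isjump f d"
    unfolding a0_def b0_def by blast
  obtain e L R F where e: "e > 0" "L \<noteq> R" "finite F" "\<forall>x\<in>{d-e<..<d}-F. f x = L"
    "\<forall>x\<in>{d<..<d+e}-F. f x = R" using d(2) unfolding isjump_def by blast
  have dxs0: "d \<notin> set xs0" using gap[OF I0(1) j01] d(1) unfolding a0_def b0_def by auto
  define K where "K = S \<union> set xs0"
  have finK: "finite K" unfolding K_def using S(1) by simp
  obtain \<delta>1 where \<delta>1: "\<delta>1 > 0" "\<forall>y\<in>K. y \<noteq> d \<longrightarrow> \<delta>1 \<le> dist d y"
    using finite_set_avoid[OF finK, of d] by blast
  have far: "y \<le> d - \<delta>1 \<or> y \<ge> d + \<delta>1" if "y \<in> K" "y \<noteq> d" for y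
    using \<delta>1(2) that by (auto simp: dist_real_def)
  have a0K: "a0 \<in> K" "b0 \<in> K" unfolding K_def a0_def b0_def using j01 by auto
  have a0le: "a0 \<le> d - \<delta>1" using far[OF a0K(1)] d(1) \<delta>1(1) by auto
  have b0ge: "d + \<delta>1 \<le> b0" using far[OF a0K(2)] d(1) \<delta>1(1) by auto
  define \<delta> where "\<delta> = min \<delta>1 e / 2"
  have \<delta>: "\<delta> > 0" "2 * \<delta> \<le> \<delta>1" "2 * \<delta> \<le> e" using \<delta>1 e unfolding \<delta>_def by auto
  define k :: nat where "k = (if L > R then n - 1 else 0)"
  have kn: "k < n" "real k \<le> real n - 1" using n2 unfolding k_def by auto
  define w where "w = \<delta> / real n"
  have w: "w > 0" "real n * w = \<delta>" using \<delta> n0 unfolding w_def by auto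
  define a where "a = d - (real k + 1/2) * w"
  define b where "b = a + \<delta>"
  have kw: "(real k + 1/2) * w < \<delta>"
  proof -
    have "(real k + 1/2) * w < real n * w" using kn(2) w(1) by (intro mult_strict_right_mono) auto
    then show ?thesis using w by simp
  qed
  have ad: "d - \<delta> < a" "a < d" using kw w unfolding a_def by auto
  have bd: "d < b" "b < d + \<delta>" using ad kw unfolding b_def a_def by auto
  have ab: "a < b" using ad bd by simp
  have a0a: "a0 < a" using a0le ad \<delta> by linarith
  have bb0: "b < b0" using b0ge bd \<delta> by linarith
  define C0 where "C0 = {p \<in> insert 0 (disc_points f' \<union> (S \<inter> {0<..<1})). p < d}"
  have subU0: "disc_points f' \<subseteq> U n P0" using i unfolding U_def P0_def by force
  have xs0U: "set xs0 = insert 0 (insert 1 (U n P0))" by (rule I0(5))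
  have C0K: "C0 \<subseteq> K" unfolding C0_def K_def using subU0 xs0U by auto
  have C0le: "p \<le> d - \<delta>1" if "p \<in> C0" for p
    using far[of p] C0K that unfolding C0_def by fastforce
  have finC0: "finite C0" unfolding C0_def using pc_finite_disc[OF pcf'] S(1) by auto
  define c0 where "c0 = card C0"
  define q where "q = (i - 1 + c0) mod n"
  define r where "r = (k + n - q) mod n"
  define E where "E = (\<lambda>t::nat. d - \<delta> - \<delta> * (real t + 1) / (real r + 1)) ` {..<r}"
  have Ebounds: "d - 2*\<delta> < y" "y < d - \<delta>" if yE: "y \<in> E" for y
  proof -
    obtain t where t: "t < r" "y = d - \<delta> - \<delta> * (real t + 1) / (real r + 1)" using yE unfolding E_def by auto
    have "(real t + 1) / (real r + 1) < 1" using t by simp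
    then have "\<delta> * ((real t + 1) / (real r + 1)) < \<delta> * 1" using \<delta> by (intro mult_strict_left_mono) auto
    moreover have "0 < \<delta> * ((real t + 1) / (real r + 1))" using \<delta> by simp
    ultimately show "d - 2*\<delta> < y" "y < d - \<delta>" using t by auto
  qed
  have cardE: "card E = r"
  proof -
    have "inj_on (\<lambda>t::nat. d - \<delta> - \<delta> * (real t + 1) / (real r + 1)) {..<r}"
      using \<delta> by (intro inj_onI) (auto simp: divide_simps)
    then show ?thesis unfolding E_def by (simp add: card_image)
  qed
  have finE: "finite E" unfolding E_def by simp
  define D where "D = ((S \<inter> {0<..<1}) - {a<..<b}) \<union> {a, b} \<union> E"
  have finD: "finite D" unfolding D_def using S(1) finE by simp
  have D01: "D \<subseteq> {0<..<1}"
  proof -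
    have "E \<subseteq> {0<..<1}"
    proof
      fix y assume yE: "y \<in> E"
      have "d - 2*\<delta> < y" "y < d - \<delta>" using Ebounds[OF yE] by auto
      then show "y \<in> {0<..<1}" using a00 a0le \<delta> ad ab bb0 b01 by auto
    qed
    moreover have "a \<in> {0<..<1}" "b \<in> {0<..<1}" using a00 a0a bb0 b01 ab by auto
    ultimately show ?thesis unfolding D_def by auto
  qed
  define fs where "fs = (\<lambda>_::nat. gD D)"
  define P1 where "P1 = fs(i := f')"
  have others: "\<forall>j\<in>{1..n} - {i}. piecewise_const_density (fs j)" unfolding fs_def using gD_pc[OF finD] by simp
  have pc1: "\<forall>l\<in>{1..n}. piecewise_const_density (P1 l)" using others pcf' unfolding P1_def by auto
  have U1: "U n P1 = disc_points f' \<union> D"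
    unfolding P1_def fs_def using U_upd[OF n2 i] gD_disc[OF finD D01] by simp
  define xs1 where "xs1 = breakpoints n P1"
  define m1 where "m1 = Suc (card (U n P1))"
  note I1 = bp_info[OF pc1, folded xs1_def m1_def]
  have set1: "set xs1 = insert 0 (insert 1 (disc_points f' \<union> D))" using I1(5) U1 by simp
  have aset: "a \<in> set xs1" "b \<in> set xs1" unfolding set1 D_def by auto
  have nobetween: "\<not> (a < x \<and> x < b)" if "x \<in> set xs1" for x
  proof
    assume x: "a < x \<and> x < b"
    have "x \<noteq> 0" "x \<noteq> 1" using x a00 a0a bb0 b01 by auto
    moreover have "x \<notin> disc_points f'"
    proof
      assume "x \<in> disc_points f'"
      then have "x \<in> set xs0" using subU0 xs0U by auto
      moreover have "xs0!j0 < x" "x < xs0!(j0+1)" using x a0a bb0 unfolding a0_def b0_def by auto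
      ultimately show False using gap[OF I0(1) j01, of x] by blast
    qed
    moreover have "x \<notin> D" using x Ebounds ad unfolding D_def by fastforce
    ultimately show False using that set1 by auto
  qed
  obtain j where j: "j + 1 < length xs1" "xs1!j = a" "xs1!(j+1) = b"
    using find_piece[OF I1(1) aset ab nobetween] by blast
  have below: "{p \<in> set xs1. p < a} = C0 \<union> E"
  proof
    show "{p \<in> set xs1. p < a} \<subseteq> C0 \<union> E"
    proof
      fix p assume p: "p \<in> {p \<in> set xs1. p < a}"
      then have pa: "p < a" "p \<in> set xs1" by auto
      then have pd: "p < d" using ad by simp
      show "p \<in> C0 \<union> E"
      proof (cases "p \<in> E")
        case False
        then have "p = 0 \<or> p \<in> disc_points f' \<or> p \<in> S \<inter> {0<..<1}"
          using pa set1 ab bb0 b01 unfolding D_def by auto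
        then show ?thesis using pd unfolding C0_def by auto
      qed simp
    qed
    show "C0 \<union> E \<subseteq> {p \<in> set xs1. p < a}"
    proof
      fix p assume p: "p \<in> C0 \<union> E"
      show "p \<in> {p \<in> set xs1. p < a}"
      proof (cases "p \<in> E")
        case True
        then show ?thesis using Ebounds[OF True] ad set1 unfolding D_def by auto
      next
        case False
        then have pC: "p \<in> C0" using p by simp
        have pa: "p < a" using C0le[OF pC] ad \<delta> by linarith
        have "p = 0 \<or> p \<in> disc_points f' \<or> p \<in> S \<inter> {0<..<1}" using pC unfolding C0_def by auto
        then have "p \<in> set xs1" using pa unfolding set1 D_def by auto
        then show ?thesis using pa by simp
      qed
    qed
  qed
  have disjCE: "C0 \<inter> E = {}"
  proof -
    have "p \<notin> E" if "p \<in> C0" for p using C0le[OF that] Ebounds[of p] \<delta> by force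
    then show ?thesis by blast
  qed
  have jidx: "j = c0 + r"
  proof -
    have "j = card {p \<in> set xs1. p < xs1!j}" using card_below[OF I1(1), of j] j(1) by simp
    also have "\<dots> = card (C0 \<union> E)" using below j(2) by simp
    also have "\<dots> = c0 + r" unfolding c0_def using card_Un_disjoint[OF finC0 finE disjCE] cardE by simp
    finally show ?thesis .
  qed
  have kj: "(i + j - 1) mod n = k"
  proof -
    have i1: "i \<ge> 1" using i by simp
    have "(i + j - 1) mod n = ((i - 1 + c0) + r) mod n" using i1 jidx by (simp add: algebra_simps)
    also have "\<dots> = (q + r) mod n" unfolding q_def by (simp add: mod_add_left_eq)
    also have "\<dots> = (q + (k + n - q)) mod n" unfolding r_def by (simp add: mod_add_right_eq)
    also have "q + (k + n - q) = k + n"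
    proof -
      have "q < n" unfolding q_def using n0 by simp
      then show ?thesis by linarith
    qed
    also have "(k + n) mod n = k" using kn by simp
    finally show ?thesis .
  qed
  have len1: "length xs1 = Suc m1" using I1(2) unfolding m1_def by simp
  have jm: "j < m1" using j(1) len1 by simp
  have mid_const: "\<forall>x\<in>{xs1!l<..<xs1!(l+1)}. f x = f ((xs1!l + xs1!(l+1))/2)" if l: "l < m1" "l \<noteq> j" for l
  proof (rule const_interior[OF S(2)])
    have l1: "l + 1 < length xs1" using l len1 by simp
    show "0 \<le> xs1!l" using sorted_le[OF I1(1), of 0 l] I1(3) l1 by simp
    show "xs1!(l+1) \<le> 1" using sorted_le[OF I1(1), of "l+1" m1] I1(4) l1 len1 l unfolding m1_def by simp
    show "S \<inter> {xs1!l<..<xs1!(l+1)} = {}"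
    proof (rule ccontr)
      assume "S \<inter> {xs1!l<..<xs1!(l+1)} \<noteq> {}"
      then obtain s where s: "s \<in> S" "xs1!l < s" "s < xs1!(l+1)" by auto
      have s01: "s \<in> {0<..<1}" using s \<open>0 \<le> xs1!l\<close> \<open>xs1!(l+1) \<le> 1\<close> by auto
      have "\<not> (a < s \<and> s < b)"
      proof (cases "l < j")
        case True
        have "xs1!(l+1) \<le> xs1!j" using sorted_le[OF I1(1), of "l+1" j] True j(1) by simp
        then show ?thesis using s j(2) by auto
      next
        case False
        then have "j + 1 \<le> l" using l(2) by simp
        then have "xs1!(j+1) \<le> xs1!l" using sorted_le[OF I1(1), of "j+1" l] l1 by simp
        then show ?thesis using s j(3) by auto
      qed
      then have "s \<in> D" using s s01 unfolding D_def by auto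
      then have "s \<in> set xs1" using set1 by auto
      then show False using gap[OF I1(1) l1, of s] s by blast
    qed
  qed
  define P where "P l = (if l = j then L*(d-a) + R*(b-d) else f ((xs1!l + xs1!(l+1))/2) * (xs1!(l+1) - xs1!l))" for l
  define Sh where "Sh l = (if l = j then L*(w/2) + R*(w/2) else f ((xs1!l + xs1!(l+1))/2) * (xs1!(l+1) - xs1!l) / real n)" for l
  have Lpart: "\<forall>x\<in>{a<..<d}-F. f x = L" using e(4) ad \<delta> by auto
  have Rpart: "\<forall>x\<in>{d<..<b}-F. f x = R" using e(5) bd \<delta> by auto
  have Pint: "(f has_integral P l) {xs1!l..xs1!(l+1)}" if l: "l < m1" for l
  proof (cases "l = j")
    case True
    have "(f has_integral L*(d-a) + R*(b-d)) {a..b}"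
      by (rule int_jump[OF less_imp_le[OF ad(2)] less_imp_le[OF bd(1)] e(3)]) (use Lpart Rpart in blast)+
    then show ?thesis using True j unfolding P_def by simp
  next
    case False
    have "(f has_integral f ((xs1!l + xs1!(l+1))/2) * (xs1!(l+1) - xs1!l)) {xs1!l..xs1!(l+1)}"
      by (rule piece_const[OF I1(1) _ finite.emptyI], use l len1 in simp, use mid_const[OF l False] in blast)
    then show ?thesis using False unfolding P_def by simp
  qed
  have segj: "seg n xs1 j k = {a + real k * w ..< a + (real k + 1) * w}"
  proof -
    have "real k / real n * (b - a) = real k * w" "real (k+1) / real n * (b - a) = (real k + 1) * w"
      unfolding b_def w_def by simp_all
    then show ?thesis unfolding seg_def j(2,3) by simp
  qed
  have Shint: "(f has_integral Sh l) (seg n xs1 l ((i + l - 1) mod n))" if l: "l < m1" for l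
  proof (cases "l = j")
    case True
    have s1: "a + real k * w \<le> d" "d \<le> a + (real k + 1) * w" using w(1) unfolding a_def by (simp_all add: algebra_simps)
    have sa: "a \<le> a + real k * w" using w(1) by simp
    have tb: "a + (real k + 1) * w \<le> a + real n * w" using w(1) kn by (intro add_left_mono mult_right_mono) auto
    have "(f has_integral L * (d - (a + real k * w)) + R * ((a + (real k + 1) * w) - d)) {a + real k * w .. a + (real k + 1) * w}"
    proof (rule int_jump[OF s1 e(3)])
      show "\<And>x. x \<in> {a + real k * w<..<d} - F \<Longrightarrow> f x = L" using Lpart sa by auto
      show "\<And>x. x \<in> {d<..<a + (real k + 1) * w} - F \<Longrightarrow> f x = R" using Rpart tb w(2) unfolding b_def by auto
    qed
    moreover have "d - (a + real k * w) = w/2" "(a + (real k + 1) * w) - d = w/2" unfolding a_def by (simp_all add: algebra_simps)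
    ultimately have "(f has_integral L*(w/2) + R*(w/2)) {a + real k * w ..< a + (real k + 1) * w}"
      unfolding int_ho_iff by simp
    then show ?thesis using True kj segj unfolding Sh_def by simp
  next
    case False
    have "(f has_integral f ((xs1!l + xs1!(l+1))/2) * (xs1!(l+1) - xs1!l) / real n) (seg n xs1 l ((i + l - 1) mod n))"
      by (rule seg_const[OF I1(1) _ _ finite.emptyI], use l len1 in simp, use n0 in simp, use mid_const[OF l False] in blast)
    then show ?thesis using False unfolding Sh_def by simp
  qed
  have totP: "(f has_integral (\<Sum>l<m1. P l)) {0..1}"
    using combine_pieces[OF I1(1) len1, of f P] Pint I1(3) I1(4) unfolding m1_def by simp
  have totS: "(f has_integral (\<Sum>l<m1. Sh l)) (alg2 n P1 i)"
  proof -
    have "(f has_integral (\<Sum>l<m1. Sh l)) (\<Union>l<m1. seg n xs1 l ((i + l - 1) mod n))"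
      by (rule union_integral[OF I1(1) len1]) (use n0 Shint in auto)
    moreover have "alg2 n P1 i = (\<Union>l<m1. seg n xs1 l ((i + l - 1) mod n))"
      unfolding alg2_eq xs1_def[symmetric] using len1 by simp
    ultimately show ?thesis by simp
  qed
  have ineq: "Sh j < P j / real n"
  proof -
    have da: "d - a = (real k + 1/2) * w" unfolding a_def by simp
    have db: "b - d = (real n - real k - 1/2) * w" unfolding b_def a_def using w(2) by (simp add: algebra_simps)
    show ?thesis unfolding Sh_def P_def da db using jump_ineq[OF n2 w(1) e(2) k_def] by simp
  qed
  have "(\<Sum>l<m1. Sh l) - (\<Sum>l<m1. P l / real n) = (\<Sum>l<m1. Sh l - P l / real n)"
    by (simp add: sum_subtractf)
  also have "\<dots> = (\<Sum>l<m1. if l = j then Sh j - P j / real n else 0)"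
    by (rule sum.cong) (auto simp: Sh_def P_def)
  also have "\<dots> = Sh j - P j / real n" using jm by simp
  finally have "(\<Sum>l<m1. Sh l) < (\<Sum>l<m1. P l) / real n" using ineq by (simp add: sum_divide_distrib)
  then have "val f (alg2 n P1 i) < 1 / real n * val f {0..1}"
    unfolding val_def using integral_unique[OF totP] integral_unique[OF totS] by simp
  then show ?thesis using others unfolding P1_def by blast
qed



lemma rat_part:
  assumes n2: "n \<ge> 2"
  shows "risk_averse_truthful n (alg2 n)"
  unfolding risk_averse_truthful_def
proof (intro ballI allI impI)
  fix i f f' assume i: "i \<in> {1..n}" and pcf: "piecewise_const_density f"
    and pcf': "piecewise_const_density f'"
  have n0: "n > 0" using n2 by simp
  have truth: "val f (alg2 n (fs(i := f)) i) = val f {0..1} / real n"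
    if o: "\<forall>j\<in>{1..n} - {i}. piecewise_const_density (fs j)" for fs
  proof -
    have pc: "\<forall>l\<in>{1..n}. piecewise_const_density ((fs(i := f)) l)" using o pcf by auto
    have sub: "disc_points f \<subseteq> U n (fs(i := f))" using i unfolding U_def by force
    show ?thesis using fair_disc[OF pc n0 pcf sub] .
  qed
  show "(\<forall>fs. (\<forall>j\<in>{1..n} - {i}. piecewise_const_density (fs j)) \<longrightarrow>
              val f (alg2 n (fs(i := f')) i) \<le> val f (alg2 n (fs(i := f)) i)) \<or>
        (\<exists>fs. (\<forall>j\<in>{1..n} - {i}. piecewise_const_density (fs j)) \<and>
              val f (alg2 n (fs(i := f')) i) < 1 / real n * val f {0..1})"
  proof (cases "\<forall>fs. (\<forall>j\<in>{1..n} - {i}. piecewise_const_density (fs j)) \<longrightarrow>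
              val f (alg2 n (fs(i := f')) i) \<le> val f {0..1} / real n")
    case True
    then show ?thesis using truth by (intro disjI1) auto
  next
    case False
    then obtain fs0 where o: "\<forall>j\<in>{1..n} - {i}. piecewise_const_density (fs0 j)"
      and gt: "val f (alg2 n (fs0(i := f')) i) > val f {0..1} / real n" by force
    show ?thesis using construct[OF n2 i pcf pcf' o gt] by (intro disjI2)
  qed
qed

theorem mainTheorem6:
  fixes n :: nat
  assumes "n \<ge> 2"
  shows "envy_free_mech n (alg2 n) \<and> risk_averse_truthful n (alg2 n)"
  using envy_free_part[OF assms] rat_part[OF assms] by simp

end
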